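(* Let $\varphi$ be an almost identity PC-map of $\mathrm{UT}(n,F)$ and let $k$ be a positive integer with $k\le n-3$. If condition $X_k$ holds for $\varphi$, then condition $Y_k$ holds for $\varphi$.
   Context: $F$ is a field and $n\in\mathbb N\cup\{\infty\}$. $\mathrm{UT}(n,F)$ is the group of upper unitriangular $n\times n$ matrices over $F$ (for $n=\infty$: all $\mathbb N\times\mathbb N$ matrices with $1$ on the diagonal and $0$ below it). Convention: $\infty+m=\infty$ for $m\in\mathbb Z$. $e$ is the identity matrix, $e_{ij}$ the matrix unit, $t_{ij}(\alpha)=e+\alpha e_{ij}$ ($i<j$). $[x,y]=xyx^{-1}y^{-1}$. A PC-map is a bijection $\varphi$ of the group with $\varphi([x,y])=[\varphi(x),\varphi(y)]$ for all $x,y$; it is almost identity if $\varphi(t_{ij}(\alpha))=t_{ij}(\alpha)$ for all $i<j$, $\alpha\in F$. $C$ denotes the center of $\mathrm{UT}(n,F)$ (trivial if $n=\infty$, equal to $\{t_{1n}(\alpha):\alpha\in F\}$ if $n$ is finite). Conditions: $X_k$ ($k\le n-2$): $\varphi(a)_{1i}=a_{1i}$ for all $a\in\mathrm{UT}(n,F)$ and all $i=2,\dots,k$. $Y_k$ ($k\le n-3$): for all $\beta,\alpha_1,\dots,\alpha_{k-1}\in F$, the matrix $y=t_{k+1\,k+2}(\beta)\prod_{i=1}^{k-1}t_{ik}(\alpha_i)$ satisfies $\varphi(y)\in yC$. *)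

theory Defs
  imports Main "HOL-Library.Extended_Nat"
begin

text \<open>Matrices are functions nat => nat => 'a, indices 1-based.
  The size n is an extended natural (infinity = N x N matrices).
  Entries outside the index range are normalised to 0.\<close>

type_synonym 'a mat = "nat \<Rightarrow> nat \<Rightarrow> 'a"

definition ut_idx :: "enat \<Rightarrow> nat \<Rightarrow> bool" where
  "ut_idx n i \<longleftrightarrow> 1 \<le> i \<and> enat i \<le> n"

definition UT :: "enat \<Rightarrow> ('a::field) mat set" where
  "UT n = {A. \<forall>i j. (\<not> (ut_idx n i \<and> ut_idx n j) \<longrightarrow> A i j = 0)
                 \<and> (ut_idx n i \<and> ut_idx n j \<longrightarrow> (i = j \<longrightarrow> A i j = 1) \<and> (j < i \<longrightarrow> A i j = 0))}"

definition ut_one :: "enat \<Rightarrow> ('a::field) mat" where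
  "ut_one n = (\<lambda>i j. if ut_idx n i \<and> i = j then 1 else 0)"

text \<open>Matrix product; for upper triangular matrices the sum is finite.\<close>
definition ut_mult :: "('a::field) mat \<Rightarrow> 'a mat \<Rightarrow> 'a mat" where
  "ut_mult A B = (\<lambda>i j. \<Sum>k\<in>{i..j}. A i k * B k j)"

definition ut_inv :: "enat \<Rightarrow> ('a::field) mat \<Rightarrow> 'a mat" where
  "ut_inv n A = (THE B. B \<in> UT n \<and> ut_mult A B = ut_one n)"

definition ut_comm :: "enat \<Rightarrow> ('a::field) mat \<Rightarrow> 'a mat \<Rightarrow> 'a mat" where
  "ut_comm n x y = ut_mult (ut_mult (ut_mult x y) (ut_inv n x)) (ut_inv n y)"

definition ut_t :: "enat \<Rightarrow> nat \<Rightarrow> nat \<Rightarrow> ('a::field) \<Rightarrow> 'a mat" where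
  "ut_t n i j \<alpha> = (\<lambda>r s. ut_one n r s + (if r = i \<and> s = j then \<alpha> else 0))"

definition PC_map :: "enat \<Rightarrow> (('a::field) mat \<Rightarrow> 'a mat) \<Rightarrow> bool" where
  "PC_map n \<phi> \<longleftrightarrow> bij_betw \<phi> (UT n) (UT n) \<and>
     (\<forall>x\<in>UT n. \<forall>y\<in>UT n. \<phi> (ut_comm n x y) = ut_comm n (\<phi> x) (\<phi> y))"

definition almost_identity :: "enat \<Rightarrow> (('a::field) mat \<Rightarrow> 'a mat) \<Rightarrow> bool" where
  "almost_identity n \<phi> \<longleftrightarrow>
     (\<forall>i j \<alpha>. ut_idx n i \<and> ut_idx n j \<and> i < j \<longrightarrow> \<phi> (ut_t n i j \<alpha>) = ut_t n i j \<alpha>)"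

definition ut_center :: "enat \<Rightarrow> ('a::field) mat set" where
  "ut_center n = (case n of enat m \<Rightarrow> {ut_t n 1 m \<alpha> | \<alpha>. True} | \<infinity> \<Rightarrow> {ut_one n})"

definition cond_X :: "enat \<Rightarrow> (('a::field) mat \<Rightarrow> 'a mat) \<Rightarrow> nat \<Rightarrow> bool" where
  "cond_X n \<phi> k \<longleftrightarrow> (\<forall>a\<in>UT n. \<forall>i\<in>{2..k}. \<phi> a 1 i = a 1 i)"

definition col_prod :: "enat \<Rightarrow> nat \<Rightarrow> (nat \<Rightarrow> ('a::field)) \<Rightarrow> nat \<Rightarrow> 'a mat" where
  "col_prod n k \<alpha> m = foldr (\<lambda>i P. ut_mult (ut_t n i k (\<alpha> i)) P) [1..<m] (ut_one n)"

definition cond_Y :: "enat \<Rightarrow> (('a::field) mat \<Rightarrow> 'a mat) \<Rightarrow> nat \<Rightarrow> bool" where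
  "cond_Y n \<phi> k \<longleftrightarrow> (\<forall>(\<beta>::'a) (\<alpha>::nat \<Rightarrow> 'a).
     let y = ut_mult (ut_t n (k+1) (k+2) \<beta>) (col_prod n k \<alpha> k)
     in \<exists>c\<in>ut_center n. \<phi> y = ut_mult y c)"

end

theory Submission imports Defs begin

lemma UT_out1: "A \<in> UT n \<Longrightarrow> \<not> ut_idx n i \<Longrightarrow> A i j = 0"
  by (auto simp: UT_def)
lemma UT_out2: "A \<in> UT n \<Longrightarrow> \<not> ut_idx n j \<Longrightarrow> A i j = 0"
  by (auto simp: UT_def)
lemma UT_diag: "A \<in> UT n \<Longrightarrow> ut_idx n i \<Longrightarrow> A i i = 1"
  by (auto simp: UT_def)
lemma UT_low: "A \<in> UT n \<Longrightarrow> j < i \<Longrightarrow> A i j = 0"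
  by (auto simp: UT_def)
lemma UTI: "(\<And>i j. \<not> (ut_idx n i \<and> ut_idx n j) \<Longrightarrow> A i j = 0) \<Longrightarrow>
  (\<And>i. ut_idx n i \<Longrightarrow> A i i = 1) \<Longrightarrow> (\<And>i j. ut_idx n i \<Longrightarrow> ut_idx n j \<Longrightarrow> j < i \<Longrightarrow> A i j = 0)
  \<Longrightarrow> A \<in> UT n"
  by (auto simp: UT_def)

lemma mult_assoc: "ut_mult (ut_mult A B) C = ut_mult A (ut_mult B C)"
proof (rule ext, rule ext)
  fix i j
  have "ut_mult (ut_mult A B) C i j = (\<Sum>k\<in>{i..j}. \<Sum>m\<in>{x. x \<in> {i..j} \<and> x \<le> k}. A i m * B m k * C k j)"
    unfolding ut_mult_def by (simp add: sum_distrib_right) (intro sum.cong; auto intro!: sum.cong)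
  also have "\<dots> = (\<Sum>m\<in>{i..j}. \<Sum>k\<in>{x. x \<in> {i..j} \<and> m \<le> x}. A i m * B m k * C k j)"
    by (rule sum.swap_restrict[symmetric]) auto
  also have "\<dots> = ut_mult A (ut_mult B C) i j"
    unfolding ut_mult_def by (simp add: sum_distrib_left mult.assoc) (intro sum.cong; auto intro!: sum.cong)
  finally show "ut_mult (ut_mult A B) C i j = ut_mult A (ut_mult B C) i j" .
qed

lemma one_UT: "ut_one n \<in> UT n"
  by (rule UTI) (auto simp: ut_one_def)

lemma mult_one_left: "B \<in> UT n \<Longrightarrow> ut_mult (ut_one n) B = B"
proof (rule ext, rule ext)
  fix i j assume B: "B \<in> UT n"
  have "ut_mult (ut_one n) B i j = (\<Sum>k\<in>{i..j}. if k = i then (if ut_idx n i then B i j else 0) else 0)"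
    unfolding ut_mult_def ut_one_def by (intro sum.cong) auto
  also have "\<dots> = B i j" using B by (auto simp: UT_out1 UT_low)
  finally show "ut_mult (ut_one n) B i j = B i j" .
qed

lemma mult_one_right: "B \<in> UT n \<Longrightarrow> ut_mult B (ut_one n) = B"
proof (rule ext, rule ext)
  fix i j assume B: "B \<in> UT n"
  have "ut_mult B (ut_one n) i j = (\<Sum>k\<in>{i..j}. if k = j then (if ut_idx n j then B i j else 0) else 0)"
    unfolding ut_mult_def ut_one_def by (intro sum.cong) auto
  also have "\<dots> = B i j" using B by (auto simp: UT_out2 UT_low)
  finally show "ut_mult B (ut_one n) i j = B i j" .
qed

lemma mult_UT: assumes A: "A \<in> UT n" and B: "B \<in> UT n" shows "ut_mult A B \<in> UT n"
proof (rule UTI)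
  fix i j :: nat assume h: "\<not> (ut_idx n i \<and> ut_idx n j)"
  show "ut_mult A B i j = 0" unfolding ut_mult_def
    using h by (auto intro!: sum.neutral simp: UT_out1[OF A] UT_out2[OF B])
next
  fix i :: nat assume "ut_idx n i"
  then show "ut_mult A B i i = 1" using A B by (simp add: ut_mult_def UT_diag)
next
  fix i j :: nat assume "j < i" then show "ut_mult A B i j = 0" by (simp add: ut_mult_def)
qed

function rinv :: "('a::field) mat \<Rightarrow> nat \<Rightarrow> nat \<Rightarrow> 'a" where
  "rinv x i j = (if i < j then - (\<Sum>m\<in>{Suc i..j}. x i m * rinv x m j) else if i = j then 1 else 0)"
  by auto
termination by (relation "measure (\<lambda>(x,i,j). j - i)") auto

declare rinv.simps[simp del]

lemma rinv_exists: assumes x: "x \<in> UT n" shows "\<exists>B\<in>UT n. ut_mult x B = ut_one n"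
proof
  define B where "B = (\<lambda>i j. if ut_idx n i \<and> ut_idx n j then rinv x i j else (0::'a))"
  show "B \<in> UT n"
    by (rule UTI) (auto simp: B_def rinv.simps)
  show "ut_mult x B = ut_one n"
  proof (rule ext, rule ext)
    fix i j
    show "ut_mult x B i j = ut_one n i j"
    proof (cases "ut_idx n i \<and> ut_idx n j \<and> i \<le> j")
      case False
      then show ?thesis
        unfolding ut_mult_def ut_one_def B_def
        using x by (auto intro!: sum.neutral simp: UT_out1 UT_out2)
    next
      case True
      then have ii: "ut_idx n i" "ut_idx n j" "i \<le> j" by auto
      have idx: "ut_idx n m" if "m \<in> {i..j}" for m using that ii
        by (auto simp: ut_idx_def) (meson enat_ord_simps(1) order_trans)
      have "ut_mult x B i j = x i i * B i j + (\<Sum>m\<in>{Suc i..j}. x i m * B m j)"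
        unfolding ut_mult_def using ii by (simp add: sum.atLeast_Suc_atMost)
      also have "\<dots> = B i j + (\<Sum>m\<in>{Suc i..j}. x i m * rinv x m j)"
        using ii idx x by (auto simp: UT_diag B_def intro!: sum.cong)
      also have "\<dots> = ut_one n i j"
      proof (cases "i = j")
        case True then show ?thesis using ii by (simp add: B_def ut_one_def rinv.simps)
      next
        case False
        then have "i < j" using ii by simp
        then have "B i j = - (\<Sum>m\<in>{Suc i..j}. x i m * rinv x m j)"
          using ii by (simp add: B_def rinv.simps[of x i j])
        then show ?thesis using \<open>i < j\<close> by (simp add: ut_one_def)
      qed
      finally show ?thesis .
    qed
  qed
qed

lemma inv_props: assumes x: "x \<in> UT n"
  shows "ut_inv n x \<in> UT n" "ut_mult x (ut_inv n x) = ut_one n" "ut_mult (ut_inv n x) x = ut_one n"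
proof -
  obtain B where B: "B \<in> UT n" "ut_mult x B = ut_one n" using rinv_exists[OF x] by blast
  obtain B' where B': "B' \<in> UT n" "ut_mult B B' = ut_one n" using rinv_exists[OF B(1)] by blast
  have "x = ut_mult x (ut_mult B B')" using B' x by (simp add: mult_one_right)
  also have "\<dots> = B'" by (simp only: mult_assoc[symmetric] B(2)) (simp add: mult_one_left B')
  finally have BX: "ut_mult B x = ut_one n" using B' by simp
  have uniq: "C = B" if "C \<in> UT n" "ut_mult x C = ut_one n" for C
  proof -
    have "C = ut_mult (ut_mult B x) C" using BX that by (simp add: mult_one_left)
    also have "\<dots> = B" by (simp add: mult_assoc that mult_one_right B)
    finally show ?thesis .
  qed
  have "ut_inv n x = B" unfolding ut_inv_def
    by (rule the_equality) (use B uniq in blast)+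
  then show "ut_inv n x \<in> UT n" "ut_mult x (ut_inv n x) = ut_one n" "ut_mult (ut_inv n x) x = ut_one n"
    using B BX by auto
qed

lemma comm_iff: assumes x: "x \<in> UT n" and t: "t \<in> UT n" and c: "c \<in> UT n"
  shows "ut_comm n x t = c \<longleftrightarrow> ut_mult c (ut_mult t x) = ut_mult x t"
proof -
  note X = inv_props[OF x] and T = inv_props[OF t]
  have xt: "ut_mult x t \<in> UT n" using x t by (rule mult_UT)
  show ?thesis
  proof
    assume h: "ut_comm n x t = c"
    have "ut_mult c (ut_mult t x) = ut_mult (ut_mult x t) (ut_mult (ut_inv n x) (ut_mult (ut_mult (ut_inv n t) t) x))"
      unfolding h[symmetric] ut_comm_def by (simp add: mult_assoc)
    also have "\<dots> = ut_mult x t" using X T x xt by (simp add: mult_one_left mult_one_right)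
    finally show "ut_mult c (ut_mult t x) = ut_mult x t" .
  next
    assume h: "ut_mult c (ut_mult t x) = ut_mult x t"
    have "ut_comm n x t = ut_mult (ut_mult c (ut_mult t x)) (ut_mult (ut_inv n x) (ut_inv n t))"
      unfolding h ut_comm_def by (simp add: mult_assoc)
    also have "\<dots> = ut_mult c (ut_mult t (ut_mult (ut_mult x (ut_inv n x)) (ut_inv n t)))"
      by (simp add: mult_assoc)
    also have "\<dots> = c" using X T c by (simp add: mult_one_left mult_one_right)
    finally show "ut_comm n x t = c" .
  qed
qed

lemma t_UT: "ut_idx n p \<Longrightarrow> ut_idx n q \<Longrightarrow> p < q \<Longrightarrow> ut_t n p q g \<in> UT n"
  by (rule UTI) (auto simp: ut_t_def ut_one_def)

lemma mult_t_left: assumes Z: "Z \<in> UT n" and pq: "p < q"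
  shows "ut_mult (ut_t n p q g) Z = (\<lambda>i j. Z i j + (if i = p then g * Z q j else 0))"
proof (rule ext, rule ext)
  fix i j
  have "ut_mult (ut_t n p q g) Z i j = (\<Sum>m\<in>{i..j}. ut_one n i m * Z m j) + (\<Sum>m\<in>{i..j}. (if i = p \<and> m = q then g else 0) * Z m j)"
    unfolding ut_mult_def ut_t_def by (simp add: distrib_right sum.distrib)
  also have "(\<Sum>m\<in>{i..j}. ut_one n i m * Z m j) = Z i j"
    using fun_cong[OF fun_cong[OF mult_one_left[OF Z]], of i j] unfolding ut_mult_def by simp
  also have "(\<Sum>m\<in>{i..j}. (if i = p \<and> m = q then g else 0) * Z m j) = (\<Sum>m\<in>{i..j}. if m = q then (if i = p then g * Z q j else 0) else 0)"
    by (intro sum.cong) auto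
  also have "\<dots> = (if i = p then g * Z q j else 0)"
    using pq UT_low[OF Z, of j q] by auto
  finally show "ut_mult (ut_t n p q g) Z i j = Z i j + (if i = p then g * Z q j else 0)" .
qed

lemma mult_t_right: assumes Z: "Z \<in> UT n" and pq: "p < q"
  shows "ut_mult Z (ut_t n p q g) = (\<lambda>i j. Z i j + (if j = q then g * Z i p else 0))"
proof (rule ext, rule ext)
  fix i j
  have "ut_mult Z (ut_t n p q g) i j = (\<Sum>m\<in>{i..j}. Z i m * ut_one n m j) + (\<Sum>m\<in>{i..j}. Z i m * (if m = p \<and> j = q then g else 0))"
    unfolding ut_mult_def ut_t_def by (simp add: distrib_left sum.distrib)
  also have "(\<Sum>m\<in>{i..j}. Z i m * ut_one n m j) = Z i j"
    using fun_cong[OF fun_cong[OF mult_one_right[OF Z]], of i j] unfolding ut_mult_def by simp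
  also have "(\<Sum>m\<in>{i..j}. Z i m * (if m = p \<and> j = q then g else 0)) = (\<Sum>m\<in>{i..j}. if m = p then (if j = q then g * Z i p else 0) else 0)"
    by (intro sum.cong) auto
  also have "\<dots> = (if j = q then g * Z i p else 0)"
    using pq UT_low[OF Z, of p i] by auto
  finally show "ut_mult Z (ut_t n p q g) i j = Z i j + (if j = q then g * Z i p else 0)" .
qed

lemma foldr_col: assumes k: "ut_idx n k" and xs: "\<forall>i\<in>set xs. 1 \<le> i \<and> i < k" "distinct xs"
  shows "foldr (\<lambda>i P. ut_mult (ut_t n i k (\<alpha> i)) P) xs (ut_one n) =
           (\<lambda>r s. ut_one n r s + (if s = k \<and> r \<in> set xs then \<alpha> r else 0))
       \<and> foldr (\<lambda>i P. ut_mult (ut_t n i k (\<alpha> i)) P) xs (ut_one n) \<in> UT n"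
  using xs
proof (induction xs)
  case Nil
  then show ?case by (simp add: one_UT)
next
  case (Cons i xs)
  let ?Q = "foldr (\<lambda>i P. ut_mult (ut_t n i k (\<alpha> i)) P) xs (ut_one n)"
  have IH: "?Q = (\<lambda>r s. ut_one n r s + (if s = k \<and> r \<in> set xs then \<alpha> r else 0))" "?Q \<in> UT n"
  proof -
    have P: "\<forall>i\<in>set xs. 1 \<le> i \<and> i < k" "distinct xs" using Cons.prems by auto
    show "?Q = (\<lambda>r s. ut_one n r s + (if s = k \<and> r \<in> set xs then \<alpha> r else 0))" "?Q \<in> UT n"
      using Cons.IH[OF P] by auto
  qed
  have i: "1 \<le> i" "i < k" "i \<notin> set xs" "k \<notin> set xs" using Cons.prems by auto
  have "enat i \<le> enat k" using i by simp
  then have "enat i \<le> n" using k unfolding ut_idx_def by (meson order_trans)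
  then have ii: "ut_idx n i" using i by (simp add: ut_idx_def)
  have "foldr (\<lambda>i P. ut_mult (ut_t n i k (\<alpha> i)) P) (i # xs) (ut_one n) = ut_mult (ut_t n i k (\<alpha> i)) ?Q"
    by simp
  also have "\<dots> = (\<lambda>r s. ?Q r s + (if r = i then \<alpha> i * ?Q k s else 0))"
    by (rule mult_t_left[OF IH(2) i(2)])
  also have "\<dots> = (\<lambda>r s. ut_one n r s + (if s = k \<and> r \<in> set (i # xs) then \<alpha> r else 0))"
    using i k unfolding IH(1) by (auto simp: ut_one_def fun_eq_iff)
  finally have E: "foldr (\<lambda>i P. ut_mult (ut_t n i k (\<alpha> i)) P) (i # xs) (ut_one n) =
      (\<lambda>r s. ut_one n r s + (if s = k \<and> r \<in> set (i # xs) then \<alpha> r else 0))" .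
  have U: "foldr (\<lambda>i P. ut_mult (ut_t n i k (\<alpha> i)) P) (i # xs) (ut_one n) \<in> UT n"
    using mult_UT[OF t_UT[OF ii k i(2)] IH(2)] by simp
  show ?case by (intro conjI E U)
qed

lemma idx_le: assumes "enat k + 3 \<le> n" "1 \<le> m" "m \<le> k + 3" shows "ut_idx n m"
proof -
  have "enat m \<le> enat k + 3" using assms(3)
    by (metis enat_ord_simps(1) numeral_eq_enat plus_enat_simps(1))
  then show ?thesis using assms unfolding ut_idx_def by (meson order_trans)
qed

lemma y_formula: assumes n: "enat k + 3 \<le> n" and k0: "0 < k"
  shows "ut_mult (ut_t n (k+1) (k+2) \<beta>) (col_prod n k \<alpha> k) =
     (\<lambda>r s. ut_one n r s + (if s = k \<and> 1 \<le> r \<and> r < k then \<alpha> r else 0) + (if r = k+1 \<and> s = k+2 then \<beta> else 0))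
   \<and> ut_mult (ut_t n (k+1) (k+2) \<beta>) (col_prod n k \<alpha> k) \<in> UT n"
proof -
  have k: "ut_idx n k" "ut_idx n (k+1)" "ut_idx n (k+2)" using idx_le[OF n] k0 by auto
  have C: "col_prod n k \<alpha> k = (\<lambda>r s. ut_one n r s + (if s = k \<and> r \<in> set [1..<k] then \<alpha> r else 0))"
    "col_prod n k \<alpha> k \<in> UT n"
    using foldr_col[OF k(1), of "[1..<k]" \<alpha>] unfolding col_prod_def by auto
  have E: "ut_mult (ut_t n (k+1) (k+2) \<beta>) (col_prod n k \<alpha> k) = (\<lambda>r s. col_prod n k \<alpha> k r s + (if r = k+1 then \<beta> * col_prod n k \<alpha> k (k+2) s else 0))"
    by (rule mult_t_left[OF C(2)]) simp
  have E2: "(\<lambda>r s. col_prod n k \<alpha> k r s + (if r = k+1 then \<beta> * col_prod n k \<alpha> k (k+2) s else 0)) =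
     (\<lambda>r s. ut_one n r s + (if s = k \<and> 1 \<le> r \<and> r < k then \<alpha> r else 0) + (if r = k+1 \<and> s = k+2 then \<beta> else 0))"
    unfolding C(1) using k by (auto simp: ut_one_def fun_eq_iff)
  have U: "ut_mult (ut_t n (k+1) (k+2) \<beta>) (col_prod n k \<alpha> k) \<in> UT n"
    by (rule mult_UT[OF t_UT[OF k(2,3)] C(2)]) simp
  show ?thesis using U unfolding E E2 by simp
qed

lemma eq_entry: assumes Z: "Z \<in> UT n" and i: "ut_idx n p" "ut_idx n q" "p < q"
  and eq: "ut_mult (ut_t n p' q' g') (ut_mult (ut_t n p q g) Z) = ut_mult Z (ut_t n p q g)" and pq': "p' < q'"
shows "Z r s + (if r = p then g * Z q s else 0) + (if r = p' then g' * (Z q' s + (if q' = p then g * Z q s else 0)) else 0)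
   = Z r s + (if s = q then g * Z r p else 0)"
proof -
  have W: "ut_mult (ut_t n p q g) Z \<in> UT n" by (rule mult_UT[OF t_UT[OF i] Z])
  have L: "ut_mult (ut_t n p' q' g') (ut_mult (ut_t n p q g) Z) = (\<lambda>r s. Z r s + (if r = p then g * Z q s else 0) + (if r = p' then g' * (Z q' s + (if q' = p then g * Z q s else 0)) else 0))"
    apply (subst mult_t_left[OF W pq'])
    unfolding mult_t_left[OF Z i(3)] by (simp add: fun_eq_iff)
  show ?thesis using fun_cong[OF fun_cong[OF eq], of r s]
    unfolding L mult_t_right[OF Z i(3)] by simp
qed

lemma entry_eq: assumes Z: "Z \<in> UT n" and i: "ut_idx n p" "ut_idx n q" "p < q" and pq': "p' < q'"
 and H: "\<And>r s. Z r s + (if r = p then g * Z q s else 0) + (if r = p' then g' * (Z q' s + (if q' = p then g * Z q s else 0)) else 0)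
   = Z r s + (if s = q then g * Z r p else 0)"
 shows "ut_mult (ut_t n p' q' g') (ut_mult (ut_t n p q g) Z) = ut_mult Z (ut_t n p q g)"
proof -
  have W: "ut_mult (ut_t n p q g) Z \<in> UT n" by (rule mult_UT[OF t_UT[OF i] Z])
  show ?thesis
    apply (subst mult_t_left[OF W pq'])
    unfolding mult_t_left[OF Z i(3)] mult_t_right[OF Z i(3)]
    using H by (simp add: fun_eq_iff)
qed

lemma transfer: assumes PC: "PC_map n \<phi>" and AI: "almost_identity n \<phi>" and y: "y \<in> UT n"
  and i: "ut_idx n p" "ut_idx n q" "p < q" and i': "ut_idx n p'" "ut_idx n q'" "p' < q'"
  and eq: "ut_mult (ut_t n p' q' g') (ut_mult (ut_t n p q g) y) = ut_mult y (ut_t n p q g)"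
  shows "ut_mult (ut_t n p' q' g') (ut_mult (ut_t n p q g) (\<phi> y)) = ut_mult (\<phi> y) (ut_t n p q g)"
proof -
  have t: "ut_t n p q g \<in> UT n" and c: "ut_t n p' q' g' \<in> UT n" using t_UT i i' by auto
  have z: "\<phi> y \<in> UT n" using PC y by (auto simp: PC_map_def bij_betw_def)
  have "ut_comm n y (ut_t n p q g) = ut_t n p' q' g'" using comm_iff[OF y t c] eq by simp
  then have "\<phi> (ut_comm n y (ut_t n p q g)) = ut_t n p' q' g'"
    using AI i' by (simp add: almost_identity_def)
  moreover have "\<phi> (ut_comm n y (ut_t n p q g)) = ut_comm n (\<phi> y) (ut_t n p q g)"
    using PC y t AI i by (simp add: PC_map_def almost_identity_def)
  ultimately have "ut_comm n (\<phi> y) (ut_t n p q g) = ut_t n p' q' g'" by simp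
  then show ?thesis using comm_iff[OF z t c] by simp
qed

theorem mainTheorem2:
  fixes n :: enat and \<phi> :: "('a::field) mat \<Rightarrow> 'a mat" and k :: nat
  assumes "PC_map n \<phi>" and "almost_identity n \<phi>"
    and "0 < k" and "enat k + 3 \<le> n"
    and "cond_X n \<phi> k"
  shows "cond_Y n \<phi> k"
proof -
  note PC = assms(1) and AI = assms(2) and k0 = assms(3) and n = assms(4) and X = assms(5)
  have I: "\<And>m. 1 \<le> m \<Longrightarrow> m \<le> k + 3 \<Longrightarrow> ut_idx n m" using idx_le[OF n] by blast
  have I1: "ut_idx n 1" "ut_idx n 2" "ut_idx n 3" "ut_idx n k" "ut_idx n (k+1)" "ut_idx n (k+2)" "ut_idx n (k+3)"
    using I k0 by auto
  have idx1: "\<And>m. ut_idx n m \<Longrightarrow> 1 \<le> m" by (simp add: ut_idx_def)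
  show ?thesis unfolding cond_Y_def Let_def
  proof (intro allI)
    fix \<beta> :: 'a and \<alpha> :: "nat \<Rightarrow> 'a"
    define Y where "Y = ut_mult (ut_t n (k+1) (k+2) \<beta>) (col_prod n k \<alpha> k)"
    have Yf: "Y = (\<lambda>r s. ut_one n r s + (if s = k \<and> 1 \<le> r \<and> r < k then \<alpha> r else 0) + (if r = k+1 \<and> s = k+2 then \<beta> else 0))"
      and YUT: "Y \<in> UT n" using y_formula[OF n k0, of \<beta> \<alpha>] unfolding Y_def by auto
    define Z where "Z = \<phi> Y"
    have ZUT: "Z \<in> UT n" using PC YUT unfolding Z_def PC_map_def bij_betw_def by auto
    have Z11: "Z 1 1 = 1" using UT_diag[OF ZUT I1(1)] .
    have TR: "Z r0 s0 + (if r0 = p then g * Z q s0 else 0) + (if r0 = p' then g' * (Z q' s0 + (if q' = p then g * Z q s0 else 0)) else 0)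
       = Z r0 s0 + (if s0 = q then g * Z r0 p else 0)"
      if i: "ut_idx n p" "ut_idx n q" "p < q" and i': "ut_idx n p'" "ut_idx n q'" "p' < q'"
      and H: "\<And>r s. Y r s + (if r = p then g * Y q s else 0) + (if r = p' then g' * (Y q' s + (if q' = p then g * Y q s else 0)) else 0)
            = Y r s + (if s = q then g * Y r p else 0)"
      for p q g p' q' g' r0 s0
    proof -
      have "ut_mult (ut_t n p' q' g') (ut_mult (ut_t n p q g) Y) = ut_mult Y (ut_t n p q g)"
        by (rule entry_eq[OF YUT i i'(3) H])
      then have "ut_mult (ut_t n p' q' g') (ut_mult (ut_t n p q g) Z) = ut_mult Z (ut_t n p q g)"
        unfolding Z_def by (rule transfer[OF PC AI YUT i i'])
      then show ?thesis by (rule eq_entry[OF ZUT i _ i'(3)])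
    qed
    have R1: "Z r s = ut_one n r s" if r: "ut_idx n r" "2 \<le> r" "k \<le> r" "r \<noteq> k+1" for r s
    proof -
      have "Z 1 s + (if (1::nat) = 1 then 1 * Z r s else 0) + (if (1::nat) = 2 then 0 * (Z 3 s + (if 3 = (1::nat) then 1 * Z r s else 0)) else 0)
         = Z 1 s + (if s = r then 1 * Z 1 1 else 0)"
      proof (rule TR[OF I1(1) r(1) _ I1(2) I1(3)])
        fix r' s'
        show "Y r' s' + (if r' = 1 then 1 * Y r s' else 0) + (if r' = 2 then 0 * (Y 3 s' + (if 3 = (1::nat) then 1 * Y r s' else 0)) else 0)
            = Y r' s' + (if s' = r then 1 * Y r' 1 else 0)"
          using r I1 by (auto simp: Yf ut_one_def)
      qed (use r in auto)
      then show ?thesis using r Z11 by (simp add: ut_one_def)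
    qed
    have R2: "Z (k+1) s = Y (k+1) s" for s
    proof -
      have "Z 1 s + (if (1::nat) = 1 then 1 * Z (k+1) s else 0) + (if (1::nat) = 1 then (-\<beta>) * (Z (k+2) s + (if k+2 = (1::nat) then 1 * Z (k+1) s else 0)) else 0)
         = Z 1 s + (if s = k+1 then 1 * Z 1 1 else 0)"
      proof (rule TR[OF I1(1) I1(5) _ I1(1) I1(6)])
        fix r' s'
        show "Y r' s' + (if r' = 1 then 1 * Y (k+1) s' else 0) + (if r' = 1 then (-\<beta>) * (Y (k+2) s' + (if k+2 = (1::nat) then 1 * Y (k+1) s' else 0)) else 0)
            = Y r' s' + (if s' = k+1 then 1 * Y r' 1 else 0)"
          using I1 by (auto simp: Yf ut_one_def)
      qed (use k0 in auto)
      moreover have "Z (k+2) s = ut_one n (k+2) s" by (rule R1) (use I1 in auto)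
      ultimately show ?thesis using Z11 I1 by (auto simp: Yf ut_one_def)
    qed
    have R3: "Z r s = Y r s" if r: "2 \<le> r" "r < k" for r s
    proof -
      have ir: "ut_idx n r" using I r by auto
      have "Z 1 s + (if (1::nat) = 1 then 1 * Z r s else 0) + (if (1::nat) = 1 then (-\<alpha> r) * (Z k s + (if k = (1::nat) then 1 * Z r s else 0)) else 0)
         = Z 1 s + (if s = r then 1 * Z 1 1 else 0)"
      proof (rule TR[OF I1(1) ir _ I1(1) I1(4)])
        fix r' s'
        show "Y r' s' + (if r' = 1 then 1 * Y r s' else 0) + (if r' = 1 then (-\<alpha> r) * (Y k s' + (if k = (1::nat) then 1 * Y r s' else 0)) else 0)
            = Y r' s' + (if s' = r then 1 * Y r' 1 else 0)"
          using I1 r ir by (auto simp: Yf ut_one_def)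
      qed (use r in auto)
      moreover have "Z k s = ut_one n k s" by (rule R1) (use I1 r in auto)
      ultimately show ?thesis using Z11 I1 r ir by (auto simp: Yf ut_one_def)
    qed
    have C1: "Z 1 s = 0" if s: "k+1 \<le> s" "s \<noteq> k+2" "ut_idx n (s+1)" for s
    proof -
      have "enat s \<le> enat (s+1)" by simp
      moreover have "1 \<le> s" using s(1) by simp
      ultimately have iS: "ut_idx n s" using s(3) unfolding ut_idx_def by (meson order_trans)
      have "Z 1 (s+1) + (if (1::nat) = s then 1 * Z (s+1) (s+1) else 0) + (if (1::nat) = 2 then 0 * (Z 3 (s+1) + (if 3 = s then 1 * Z (s+1) (s+1) else 0)) else 0)
         = Z 1 (s+1) + (if s+1 = s+1 then 1 * Z 1 s else 0)"
      proof (rule TR[OF iS s(3) _ I1(2) I1(3)])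
        fix r' s'
        show "Y r' s' + (if r' = s then 1 * Y (s+1) s' else 0) + (if r' = 2 then 0 * (Y 3 s' + (if 3 = s then 1 * Y (s+1) s' else 0)) else 0)
            = Y r' s' + (if s' = s+1 then 1 * Y r' s else 0)"
          using s iS by (simp add: Yf ut_one_def)
      qed (use s in auto)
      then show ?thesis using s k0 by simp
    qed
    have C2: "Z 1 (k+2) = 0"
    proof -
      have "Z 1 (k+3) + (if (1::nat) = k+2 then 1 * Z (k+3) (k+3) else 0) + (if (1::nat) = k+1 then \<beta> * (Z (k+3) (k+3) + (if k+3 = k+2 then 1 * Z (k+3) (k+3) else 0)) else 0)
         = Z 1 (k+3) + (if k+3 = k+3 then 1 * Z 1 (k+2) else 0)"
      proof (rule TR[OF I1(6) I1(7) _ I1(5) I1(7)])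
        fix r' s'
        show "Y r' s' + (if r' = k+2 then 1 * Y (k+3) s' else 0) + (if r' = k+1 then \<beta> * (Y (k+3) s' + (if k+3 = k+2 then 1 * Y (k+3) s' else 0)) else 0)
            = Y r' s' + (if s' = k+3 then 1 * Y r' (k+2) else 0)"
          using I1 by (auto simp: Yf ut_one_def)
      qed auto
      then show ?thesis using k0 by simp
    qed
    have key: "Z r s = Y r s" if ne: "\<not> (r = 1 \<and> enat s = n)" for r s
    proof (cases "ut_idx n r \<and> ut_idx n s")
      case False
      then show ?thesis using UT_out1[OF ZUT] UT_out2[OF ZUT] UT_out1[OF YUT] UT_out2[OF YUT] by metis
    next
      case True
      note rs = this
      show ?thesis
      proof (cases "s \<le> r")
        case True
        then show ?thesis using rs UT_low[OF ZUT] UT_low[OF YUT] UT_diag[OF ZUT] UT_diag[OF YUT]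
          by (metis le_neq_implies_less)
      next
        case False
        then have sr: "r < s" by simp
        show ?thesis
        proof (cases "r = 1")
          case False
          then have r2: "2 \<le> r" using idx1 rs by fastforce
          show ?thesis
          proof (cases "r < k")
            case True then show ?thesis using R3 r2 by blast
          next
            case False
            show ?thesis
            proof (cases "r = k+1")
              case True then show ?thesis using R2 by blast
            next
              case False
              then show ?thesis using R1[of r s] rs r2 \<open>\<not> r < k\<close> by (auto simp: Yf)
            qed
          qed
        next
          case True
          note r1 = this
          show ?thesis
          proof (cases "s \<le> k")
            case True
            then show ?thesis using X YUT r1 sr unfolding cond_X_def Z_def by auto
          next
            case False
            have Y0: "Y 1 s = 0" using False k0 by (simp add: Yf ut_one_def)
            show ?thesis
            proof (cases "s = k+2")
              case True then show ?thesis using C2 Y0 r1 by simp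
            next
              case False
              have "ut_idx n (s+1)"
              proof (rule ccontr)
                assume "\<not> ut_idx n (s+1)"
                then have "n < enat (s+1)" using rs by (auto simp: ut_idx_def)
                then have "n \<le> enat s" by (metis Suc_ile_eq add.commute plus_1_eq_Suc enat_ord_simps(2) not_le eSuc_enat ileI1 order.strict_iff_not)
                then have "enat s = n" using rs by (auto simp: ut_idx_def)
                then show False using ne r1 by simp
              qed
              then show ?thesis using C1[of s] False \<open>\<not> s \<le> k\<close> Y0 r1 by simp
            qed
          qed
        qed
      qed
    qed
    show "\<exists>c\<in>ut_center n. \<phi> Y = ut_mult Y c"
    proof (cases n)
      case (enat m)
      have m: "k + 3 \<le> m" using n enat
        by (metis enat_ord_simps(1) numeral_eq_enat plus_enat_simps(1))
      have Y11: "Y 1 1 = 1" using UT_diag[OF YUT I1(1)] .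
      have "ut_mult Y (ut_t n 1 m (Z 1 m)) = (\<lambda>i j. Y i j + (if j = m then Z 1 m * Y i 1 else 0))"
        by (rule mult_t_right[OF YUT]) (use m in simp)
      also have "\<dots> = Z"
      proof (rule ext, rule ext)
        fix i j
        show "Y i j + (if j = m then Z 1 m * Y i 1 else 0) = Z i j"
        proof (cases "i = 1 \<and> j = m")
          case True then show ?thesis using m Y11 by (simp add: Yf ut_one_def)
        next
          case False
          have "Z i j = Y i j" using key[of i j] False enat by auto
          moreover have "j = m \<Longrightarrow> Y i 1 = 0" using False m by (auto simp: Yf ut_one_def)
          ultimately show ?thesis by auto
        qed
      qed
      finally have "\<phi> Y = ut_mult Y (ut_t n 1 m (Z 1 m))" unfolding Z_def by simp
      moreover have "ut_t n 1 m (Z 1 m) \<in> ut_center n" using enat by (auto simp: ut_center_def)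
      ultimately show ?thesis by blast
    next
      case infinity
      have "Z = Y" using key infinity by (auto simp: fun_eq_iff)
      then have "\<phi> Y = ut_mult Y (ut_one n)" using mult_one_right[OF YUT] unfolding Z_def by simp
      moreover have "ut_one n \<in> ut_center n" using infinity by (simp add: ut_center_def)
      ultimately show ?thesis by blast
    qed
  qed
qed

end
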